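(* Let $G = (V, E, b, c)$ be a weighted hypergraph and run procedure COVER on the stream of its edges. For every integer $r$, the edge collection $S(r) = \{ e \in E \mid \exists v \in V \text{ with } \mathrm{eff}_\infty(v) = r \text{ and } \mathrm{eid}_\infty(v) = \mathrm{id}(e) \}$ satisfies \[ c(S(r)) < b(V) / 2^{r-1}. \]
   Context: A weighted hypergraph $G = (V, E, b, c)$ has vertex set $V$, a multiset $E$ of non-empty edges $e \subseteq V$, benefits $b : V \to \mathbb{Q}_{>0}$ and costs $c : E \to \mathbb{Q}_{>0}$; $b(U) = \sum_{v \in U} b(v)$, $c(F) = \sum_{e \in F} c(e)$. Edges arrive in a stream $e_0, e_1, \dots$, and $\mathrm{id}(e)$ is a unique identifier of edge $e$. Procedure COVER maintains for each $v \in V$ a variable $\mathrm{eid}(v)$ (initially NULL) and an integer variable $\mathrm{eff}(v)$ (initially $-\infty$); $\mathrm{eff}_t(v)$ denotes its value just before $e_t$ is processed, and $\mathrm{eff}_\infty(v)$, $\mathrm{eid}_\infty(v)$ the values after the whole stream has been processed. For $T \subseteq e_t$ the level is $\mathrm{lev}_t(T) = \lceil \lg (b(T)/c(e_t)) \rceil$ ($\lg$ = base-2 logarithm), and $T$ is effective at time $t$ if $\mathrm{lev}_t(T) > \mathrm{eff}_t(v)$ for every $v \in T$ (the empty set is vacuously effective). When $e_t$ arrives, COVER computes an effective subset $T \subseteq e_t$ of largest benefit $b(T)$ (any such subset) and, for every $v \in T$, sets $\mathrm{eid}(v) \leftarrow \mathrm{id}(e_t)$ and $\mathrm{eff}(v)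 \leftarrow \mathrm{lev}_t(T)$. *)

theory Defs
  imports Complex_Main
begin

text \<open>The stream of edges is a list es; the edge e_t = es ! t has identifier t.
  Costs are given per stream position (E is a multiset): c t = c(e_t).
  eid(v) :: nat option (None = NULL), eff(v) :: int option (None = minus infinity).\<close>

type_synonym 'v cover_state = "('v \<Rightarrow> nat option) \<times> ('v \<Rightarrow> int option)"

definition cover_init :: "'v cover_state" where
  "cover_init = ((\<lambda>_. None), (\<lambda>_. None))"

definition lev :: "('v \<Rightarrow> rat) \<Rightarrow> rat \<Rightarrow> 'v set \<Rightarrow> int" where
  "lev b ce T = \<lceil>log 2 (real_of_rat (sum b T / ce))\<rceil>"

definition above_eff :: "int \<Rightarrow> int option \<Rightarrow> bool" where
  "above_eff l x = (case x of None \<Rightarrow> True | Some k \<Rightarrow> k < l)"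

definition effective :: "('v \<Rightarrow> rat) \<Rightarrow> rat \<Rightarrow> 'v set \<Rightarrow> ('v \<Rightarrow> int option) \<Rightarrow> 'v set \<Rightarrow> bool" where
  "effective b ce e eff T = (T \<subseteq> e \<and> (\<forall>v\<in>T. above_eff (lev b ce T) (eff v)))"

definition max_effective :: "('v \<Rightarrow> rat) \<Rightarrow> rat \<Rightarrow> 'v set \<Rightarrow> ('v \<Rightarrow> int option) \<Rightarrow> 'v set \<Rightarrow> bool" where
  "max_effective b ce e eff T =
     (effective b ce e eff T \<and> (\<forall>T'. effective b ce e eff T' \<longrightarrow> sum b T' \<le> sum b T))"

definition cover_step :: "('v \<Rightarrow> rat) \<Rightarrow> rat \<Rightarrow> 'v set \<Rightarrow> nat \<Rightarrow> 'v cover_state \<Rightarrow> 'v cover_state \<Rightarrow> bool" where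
  "cover_step b ce e i s s' =
     (\<exists>T. max_effective b ce e (snd s) T \<and>
          s' = ((\<lambda>v. if v \<in> T then Some i else fst s v),
                (\<lambda>v. if v \<in> T then Some (lev b ce T) else snd s v)))"

text \<open>ss ! t is the state just before e_t is processed; last ss is the final state.\<close>
definition cover_run :: "('v \<Rightarrow> rat) \<Rightarrow> (nat \<Rightarrow> rat) \<Rightarrow> 'v set list \<Rightarrow> 'v cover_state list \<Rightarrow> bool" where
  "cover_run b c es ss =
     (length ss = Suc (length es) \<and> ss ! 0 = cover_init \<and>
      (\<forall>t < length es. cover_step b (c t) (es ! t) t (ss ! t) (ss ! Suc t)))"

definition weighted_hypergraph :: "'v set \<Rightarrow> 'v set list \<Rightarrow> ('v \<Rightarrow> rat) \<Rightarrow> (nat \<Rightarrow> rat) \<Rightarrow> bool" where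
  "weighted_hypergraph V es b c =
     (finite V \<and> (\<forall>t < length es. es ! t \<noteq> {} \<and> es ! t \<subseteq> V) \<and>
      (\<forall>v\<in>V. b v > 0) \<and> (\<forall>t < length es. c t > 0))"

end

theory Submission
  imports Defs
begin

lemma of_rat_powi: "real_of_rat ((2::rat) powi k) = (2::real) powi k"
  by (cases "k \<ge> 0") (auto simp: power_int_def of_rat_power of_rat_inverse of_rat_divide)

lemma levpos:
  fixes x :: rat and r :: int
  assumes "x > 0" "\<lceil>log 2 (real_of_rat x)\<rceil> = r"
  shows "x > 2 powi (r - 1)"
proof -
  have "log 2 (real_of_rat x) > real_of_int (r - 1)" using assms(2) by linarith
  hence "real_of_rat x > 2 powr real_of_int (r-1)"
    using assms(1) by (simp add: less_log_iff)
  also have "2 powr real_of_int (r-1) = (2::real) powi (r-1)" using powr_real_of_int'[of 2 "r-1"] by simp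
  also have "... = real_of_rat (2 powi (r-1))" by (simp add: of_rat_powi)
  finally show ?thesis by (simp add: of_rat_less)
qed

theorem lemma9:
  fixes V :: "'v set" and es :: "'v set list" and b :: "'v \<Rightarrow> rat" and c :: "nat \<Rightarrow> rat"
    and ss :: "'v cover_state list" and r :: int
  assumes "weighted_hypergraph V es b c"
    and "V \<noteq> {}"
    and "cover_run b c es ss"
  shows "sum c {t. t < length es \<and>
                 (\<exists>v\<in>V. snd (last ss) v = Some r \<and> fst (last ss) v = Some t)}
         < sum b V / (2::rat) powi (r - 1)"
proof -
  define n where "n = length es"
  have hg: "finite V" "\<And>t. t < n \<Longrightarrow> es ! t \<subseteq> V" "\<And>v. v \<in> V \<Longrightarrow> b v > 0"
    "\<And>t. t < n \<Longrightarrow> c t > 0"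
    using assms(1) unfolding weighted_hypergraph_def n_def by auto
  have len: "length ss = Suc n" and s0: "ss ! 0 = cover_init"
    and stp: "\<And>t. t < n \<Longrightarrow> cover_step b (c t) (es ! t) t (ss ! t) (ss ! Suc t)"
    using assms(3) unfolding cover_run_def n_def by auto
  have lastss: "last ss = ss ! n" proof -
    have "ss \<noteq> []" using len by auto
    then show ?thesis using len by (simp add: last_conv_nth)
  qed
  define P where "P t T \<longleftrightarrow> max_effective b (c t) (es ! t) (snd (ss ! t)) T \<and>
          ss ! Suc t = ((\<lambda>v. if v \<in> T then Some t else fst (ss ! t) v),
                (\<lambda>v. if v \<in> T then Some (lev b (c t) T) else snd (ss ! t) v))" for t T
  define TT where "TT t = (SOME T. P t T)" for t
  have PT: "P t (TT t)" if "t < n" for t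
  proof -
    have "\<exists>T. P t T" using stp[OF that] unfolding cover_step_def P_def by simp
    then show ?thesis unfolding TT_def by (rule someI_ex)
  qed
  have Tsub: "TT t \<subseteq> es ! t" if "t < n" for t
    using PT[OF that] unfolding P_def max_effective_def effective_def by auto
  have Teff: "\<And>v. v \<in> TT t \<Longrightarrow> above_eff (lev b (c t) (TT t)) (snd (ss ! t) v)" if "t < n" for t
    using PT[OF that] unfolding P_def max_effective_def effective_def by auto
  have fstS: "fst (ss ! Suc t) v = (if v \<in> TT t then Some t else fst (ss ! t) v)" if "t < n" for t v
    using PT[OF that] unfolding P_def by simp
  have sndS: "snd (ss ! Suc t) v = (if v \<in> TT t then Some (lev b (c t) (TT t)) else snd (ss ! t) v)"
    if "t < n" for t v
    using PT[OF that] unfolding P_def by simp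
  have mono1: "\<exists>k'. snd (ss ! Suc t) v = Some k' \<and> k \<le> k'"
    if "t < n" "snd (ss ! t) v = Some k" for t v k
  proof (cases "v \<in> TT t")
    case True
    then have "above_eff (lev b (c t) (TT t)) (Some k)" using Teff[OF that(1)] that(2) by metis
    then show ?thesis using True sndS[OF that(1)] by (simp add: above_eff_def)
  next
    case False then show ?thesis using sndS[OF that(1)] that(2) by simp
  qed
  have mono: "\<exists>k'. snd (ss ! (t + d)) v = Some k' \<and> k \<le> k'"
    if "t + d \<le> n" "snd (ss ! t) v = Some k" for t d v k
    using that
  proof (induction d)
    case 0 then show ?case by simp
  next
    case (Suc d)
    then obtain k' where "snd (ss ! (t + d)) v = Some k'" "k \<le> k'" by force
    then obtain k'' where "snd (ss ! Suc (t + d)) v = Some k''" "k' \<le> k''"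
      using mono1[of "t+d" v k'] Suc.prems by auto
    then show ?case using \<open>k \<le> k'\<close> by auto
  qed
  have inv: "\<forall>v t. fst (ss ! m) v = Some t \<longrightarrow> t < m \<and> v \<in> TT t \<and> snd (ss ! m) v = Some (lev b (c t) (TT t))"
    if "m \<le> n" for m
    using that
  proof (induction m)
    case 0 then show ?case using s0 by (simp add: cover_init_def)
  next
    case (Suc m)
    then have m: "m < n" by simp
    show ?case
    proof (intro allI impI)
      fix v t assume h: "fst (ss ! Suc m) v = Some t"
      show "t < Suc m \<and> v \<in> TT t \<and> snd (ss ! Suc m) v = Some (lev b (c t) (TT t))"
      proof (cases "v \<in> TT m")
        case True then show ?thesis using h fstS[OF m] sndS[OF m] by auto
      next
        case False
        then have "fst (ss ! m) v = Some t" using h fstS[OF m] by simp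
        then have "t < m \<and> v \<in> TT t \<and> snd (ss ! m) v = Some (lev b (c t) (TT t))"
          using Suc.IH m by simp
        then show ?thesis using False sndS[OF m] by simp
      qed
    qed
  qed
  define S where "S = {t. t < length es \<and>
                 (\<exists>v\<in>V. snd (last ss) v = Some r \<and> fst (last ss) v = Some t)}"
  have Sprop: "t < n \<and> lev b (c t) (TT t) = r \<and> TT t \<noteq> {}" if "t \<in> S" for t
  proof -
    from that obtain v where v: "t < n" "snd (ss ! n) v = Some r" "fst (ss ! n) v = Some t"
      unfolding S_def lastss n_def by auto
    then show ?thesis using inv[of n] by auto
  qed
  have disj: "TT t \<inter> TT t' = {}" if tS: "t \<in> S" "t' \<in> S" "t < t'" for t t'
  proof (rule ccontr)
    assume "TT t \<inter> TT t' \<noteq> {}"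
    then obtain w where w: "w \<in> TT t" "w \<in> TT t'" by auto
    have tn: "t < n" "t' < n" using Sprop that by auto
    have "snd (ss ! Suc t) w = Some r" using sndS[OF tn(1)] w Sprop[OF that(1)] by simp
    moreover have "Suc t + (t' - Suc t) = t'" "t' \<le> n" using tS tn by auto
    ultimately have "\<exists>k. snd (ss ! t') w = Some k \<and> r \<le> k"
      using mono[of "Suc t" "t' - Suc t" w r] by simp
    then obtain k where k: "snd (ss ! t') w = Some k" "r \<le> k" by blast
    then have "k < lev b (c t') (TT t')" using Teff[OF tn(2) w(2)] k(1) by (simp add: above_eff_def)
    then show False using Sprop[OF tS(2)] k by simp
  qed
  have Sfin: "finite S" unfolding S_def by simp
  have cbound: "c t < sum b (TT t) / 2 powi (r - 1)" if "t \<in> S" for t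
  proof -
    have tn: "t < n" and lv: "lev b (c t) (TT t) = r" and ne: "TT t \<noteq> {}" using Sprop[OF that] by auto
    have TV: "TT t \<subseteq> V" using Tsub[OF tn] hg(2)[OF tn] by auto
    have fT: "finite (TT t)" using TV hg(1) finite_subset by auto
    have bpos: "sum b (TT t) > 0" using ne fT TV hg(3) by (intro sum_pos) auto
    have cpos: "c t > 0" using hg(4) tn by simp
    have "sum b (TT t) / c t > 2 powi (r - 1)"
      using levpos[of "sum b (TT t) / c t" r] lv bpos cpos unfolding lev_def by simp
    then show ?thesis using cpos by (simp add: field_simps)
  qed
  have bVpos: "sum b V > 0" using assms(2) hg by (intro sum_pos) auto
  have p2: "(2::rat) powi (r - 1) > 0" by simp
  have "sum c S < sum b V / (2::rat) powi (r - 1)"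
  proof (cases "S = {}")
    case True then show ?thesis using bVpos p2 by simp
  next
    case False
    have "sum c S < (\<Sum>t\<in>S. sum b (TT t) / 2 powi (r - 1))"
      using cbound Sfin False by (intro sum_strict_mono) auto
    also have "\<dots> = sum b (\<Union>t\<in>S. TT t) / 2 powi (r - 1)"
    proof -
      have fT: "\<And>t. t \<in> S \<Longrightarrow> finite (TT t)"
        using Sprop Tsub hg(1,2) by (meson finite_subset subset_trans)
      have "sum b (\<Union>t\<in>S. TT t) = (\<Sum>t\<in>S. sum b (TT t))"
      proof (rule sum.UNION_disjoint[OF Sfin])
        show "\<forall>i\<in>S. finite (TT i)" using fT by blast
        show "\<forall>i\<in>S. \<forall>j\<in>S. i \<noteq> j \<longrightarrow> TT i \<inter> TT j = {}"
        proof (intro ballI impI)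
          fix i j assume "i \<in> S" "j \<in> S" "i \<noteq> j"
          then show "TT i \<inter> TT j = {}"
            using disj[of i j] disj[of j i] by (cases "i < j") auto
        qed
      qed
      then show ?thesis by (simp add: sum_divide_distrib)
    qed
    also have "\<dots> \<le> sum b V / 2 powi (r - 1)"
    proof -
      have "(\<Union>t\<in>S. TT t) \<subseteq> V" using Sprop Tsub hg(2) by blast
      then have "sum b (\<Union>t\<in>S. TT t) \<le> sum b V"
        using hg(1,3) by (intro sum_mono2) (auto intro: less_imp_le)
      then show ?thesis using p2 by (simp add: divide_right_mono)
    qed
    finally show ?thesis .
  qed
  then show ?thesis unfolding S_def .
qed

end
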